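(* Let $P=(|P|,\preccurlyeq)$ be a finite poset with a bicoloring, and fix a reference total ordering of $|P|$. Then the sign-imbalance of $P$ (number of even linearizations minus number of odd linearizations) equals the number of even linearizations compatible with the bicoloring minus the number of odd linearizations compatible with the bicoloring. In particular, if $P$ has no linearization compatible with the given bicoloring, then $P$ is sign-balanced (its sign-imbalance is $0$).
   Context: A linearization of a finite poset $P$ with $n$ elements is a total order on $|P|$ refining $\preccurlyeq$. Given a fixed reference ordering $q_1,\dots,q_n$ of $|P|$, a linearization listing the elements as $q_{\sigma(1)}<\dots<q_{\sigma(n)}$ is called even or odd according to whether the permutation $\sigma$ is even or odd. A bicoloring of $P$ is a partition of $|P|$ into two color classes such that whenever one element covers another (i.e. $x\preccurlyeq y$, $x\neq y$, no element strictly between), they have opposite colors. A linearization is compatible with the bicoloring if any two elements that are consecutive in the linearization have opposite colors. *)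

theory Defs
  imports "HOL-Combinatorics.Permutations"
begin

definition finite_poset :: "'a set \<Rightarrow> ('a \<Rightarrow> 'a \<Rightarrow> bool) \<Rightarrow> bool" where
  "finite_poset S le \<longleftrightarrow> finite S \<and>
     (\<forall>x\<in>S. le x x) \<and>
     (\<forall>x\<in>S. \<forall>y\<in>S. le x y \<and> le y x \<longrightarrow> x = y) \<and>
     (\<forall>x\<in>S. \<forall>y\<in>S. \<forall>z\<in>S. le x y \<and> le y z \<longrightarrow> le x z)"

definition covers :: "'a set \<Rightarrow> ('a \<Rightarrow> 'a \<Rightarrow> bool) \<Rightarrow> 'a \<Rightarrow> 'a \<Rightarrow> bool" where
  "covers S le x y \<longleftrightarrow> x \<in> S \<and> y \<in> S \<and> le x y \<and> x \<noteq> y \<and>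
     \<not> (\<exists>z\<in>S. le x z \<and> le z y \<and> z \<noteq> x \<and> z \<noteq> y)"

definition bicoloring :: "'a set \<Rightarrow> ('a \<Rightarrow> 'a \<Rightarrow> bool) \<Rightarrow> ('a \<Rightarrow> bool) \<Rightarrow> bool" where
  "bicoloring S le col \<longleftrightarrow> (\<forall>x y. covers S le x y \<longrightarrow> col x \<noteq> col y)"

definition linearization :: "'a set \<Rightarrow> ('a \<Rightarrow> 'a \<Rightarrow> bool) \<Rightarrow> 'a list \<Rightarrow> bool" where
  "linearization S le ls \<longleftrightarrow> distinct ls \<and> set ls = S \<and>
     (\<forall>i<length ls. \<forall>j<length ls. le (ls ! i) (ls ! j) \<longrightarrow> i \<le> j)"

definition linearizations :: "'a set \<Rightarrow> ('a \<Rightarrow> 'a \<Rightarrow> bool) \<Rightarrow> 'a list set" where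
  "linearizations S le = {ls. linearization S le ls}"

definition compatible :: "('a \<Rightarrow> bool) \<Rightarrow> 'a list \<Rightarrow> bool" where
  "compatible col ls \<longleftrightarrow> (\<forall>i. Suc i < length ls \<longrightarrow> col (ls ! i) \<noteq> col (ls ! Suc i))"

text \<open>Given the reference ordering qs = [q_1,...,q_n] (0-indexed), the linearization
  ls lists q_{\<sigma>(0)}, ..., q_{\<sigma>(n-1)}; \<sigma> is extended by the identity outside {0..<n}.\<close>
definition lin_perm :: "'a list \<Rightarrow> 'a list \<Rightarrow> nat \<Rightarrow> nat" where
  "lin_perm qs ls k = (if k < length ls then (THE i. i < length qs \<and> qs ! i = ls ! k) else k)"

definition sign_imbalance :: "'a set \<Rightarrow> ('a \<Rightarrow> 'a \<Rightarrow> bool) \<Rightarrow> 'a list \<Rightarrow> int" where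
  "sign_imbalance S le qs =
     int (card {ls \<in> linearizations S le. evenperm (lin_perm qs ls)})
   - int (card {ls \<in> linearizations S le. \<not> evenperm (lin_perm qs ls)})"

definition sign_balanced :: "'a set \<Rightarrow> ('a \<Rightarrow> 'a \<Rightarrow> bool) \<Rightarrow> 'a list \<Rightarrow> bool" where
  "sign_balanced S le qs \<longleftrightarrow> sign_imbalance S le qs = 0"

end

theory Submission
  imports Defs
begin

definition swapl :: "'a list \<Rightarrow> nat \<Rightarrow> 'a list" where
  "swapl ls i = ls[i := ls ! Suc i, Suc i := ls ! i]"

lemma swapl_len[simp]: "length (swapl ls i) = length ls"
  by (simp add: swapl_def)

lemma swapl_nth:
  assumes "Suc i < length ls" "p < length ls"
  shows "swapl ls i ! p = ls ! (Transposition.transpose i (Suc i) p)"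
  using assms by (auto simp: swapl_def nth_list_update transpose_def)

lemma swapl_swapl:
  assumes "Suc i < length ls"
  shows "swapl (swapl ls i) i = ls"
  using assms by (auto simp: swapl_def list_eq_iff_nth_eq nth_list_update)

lemma the_idx:
  assumes "distinct qs" "x \<in> set qs"
  shows "(THE i. i < length qs \<and> qs ! i = x) < length qs \<and> qs ! (THE i. i < length qs \<and> qs ! i = x) = x"
proof -
  obtain j where j: "j < length qs" "qs ! j = x" using assms(2) by (auto simp: in_set_conv_nth)
  have "(THE i. i < length qs \<and> qs ! i = x) = j"
    apply (rule the_equality) using j assms(1) by (auto simp: nth_eq_iff_index_eq)
  thus ?thesis using j by simp
qed

lemma lin_perm_permutes:
  assumes "distinct qs" "distinct ls" "set ls = set qs"
  shows "lin_perm qs ls permutes {..<length qs}"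
proof -
  have len: "length ls = length qs" using assms by (metis distinct_card)
  let ?p = "lin_perm qs ls"
  have img: "?p ` {..<length qs} \<subseteq> {..<length qs}"
  proof
    fix y assume "y \<in> ?p ` {..<length qs}"
    then obtain x where x: "x < length qs" "y = ?p x" by auto
    have "ls ! x \<in> set qs" using x len assms(3) nth_mem[of x ls] by simp
    thus "y \<in> {..<length qs}" using x len the_idx[OF assms(1)] by (simp add: lin_perm_def)
  qed
  have inj: "inj_on ?p {..<length qs}"
  proof (rule inj_onI)
    fix a b assume a: "a \<in> {..<length qs}" and b: "b \<in> {..<length qs}" and e: "?p a = ?p b"
    have "ls ! a \<in> set qs" "ls ! b \<in> set qs" using a b len assms(3) by auto
    note ab = this
    have eq: "(THE i. i < length qs \<and> qs ! i = ls ! a) = (THE i. i < length qs \<and> qs ! i = ls ! b)"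
      using e a b len by (simp add: lin_perm_def)
    have "ls ! a = qs ! (THE i. i < length qs \<and> qs ! i = ls ! a)"
      using the_idx[OF assms(1) ab(1)] by simp
    also have "\<dots> = qs ! (THE i. i < length qs \<and> qs ! i = ls ! b)" using eq by (rule arg_cong)
    also have "\<dots> = ls ! b" using the_idx[OF assms(1) ab(2)] by simp
    finally have "ls ! a = ls ! b" .
    thus "a = b" using a b len assms(2) by (simp add: nth_eq_iff_index_eq)
  qed
  have "?p ` {..<length qs} = {..<length qs}"
    by (rule endo_inj_surj) (use img inj in auto)
  hence "bij_betw ?p {..<length qs} {..<length qs}" using inj by (simp add: bij_betw_def)
  thus ?thesis by (rule bij_imp_permutes) (auto simp: lin_perm_def len)
qed

lemma lin_perm_swapl:
  assumes "length ls = length qs" "Suc i < length ls"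
  shows "lin_perm qs (swapl ls i) = lin_perm qs ls \<circ> Transposition.transpose i (Suc i)"
proof
  fix k
  show "lin_perm qs (swapl ls i) k = (lin_perm qs ls \<circ> Transposition.transpose i (Suc i)) k"
  proof (cases "k < length ls")
    case True
    have "Transposition.transpose i (Suc i) k < length ls" using True assms
      by (auto simp: transpose_def)
    thus ?thesis using True assms by (simp add: lin_perm_def swapl_nth)
  next
    case False
    hence "Transposition.transpose i (Suc i) k = k" using assms by (auto simp: transpose_def)
    thus ?thesis using False by (simp add: lin_perm_def)
  qed
qed

lemma evenperm_swapl:
  assumes "distinct qs" "linearization (set qs) le ls" "Suc i < length ls"
  shows "evenperm (lin_perm qs (swapl ls i)) = (\<not> evenperm (lin_perm qs ls))"
proof -
  have d: "distinct ls" "set ls = set qs" using assms(2) by (auto simp: linearization_def)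
  have len: "length ls = length qs" using assms(1) d by (metis distinct_card)
  have "permutation (lin_perm qs ls)"
    using lin_perm_permutes[OF assms(1) d] permutes_imp_permutation by blast
  moreover have "permutation (Transposition.transpose i (Suc i))"
    by (simp add: permutation_swap_id)
  ultimately show ?thesis
    using lin_perm_swapl[OF len assms(3)] by (simp add: evenperm_comp evenperm_swap)
qed

definition bad :: "('a \<Rightarrow> bool) \<Rightarrow> 'a list \<Rightarrow> nat \<Rightarrow> bool" where
  "bad col ls i \<longleftrightarrow> Suc i < length ls \<and> col (ls ! i) = col (ls ! Suc i)"

lemma compatible_bad: "compatible col ls \<longleftrightarrow> \<not> (\<exists>i. bad col ls i)"
  by (auto simp: compatible_def bad_def)

lemma bad_swapl:
  assumes "bad col ls i"
  shows "bad col (swapl ls i) = bad col ls"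
proof -
  have "\<And>p. p < length ls \<Longrightarrow> col (swapl ls i ! p) = col (ls ! p)"
    using assms by (auto simp: bad_def swapl_nth transpose_def)
  thus ?thesis by (auto simp: bad_def fun_eq_iff)
qed

lemma bad_incomp:
  assumes fp: "finite_poset S le" and bc: "bicoloring S le col"
    and lin: "linearization S le ls" and b: "bad col ls i"
  shows "\<not> le (ls ! i) (ls ! Suc i) \<and> \<not> le (ls ! Suc i) (ls ! i)"
proof -
  have i: "Suc i < length ls" using b by (simp add: bad_def)
  have d: "distinct ls" "set ls = S" using lin by (auto simp: linearization_def)
  have ord: "\<And>p q. p < length ls \<Longrightarrow> q < length ls \<Longrightarrow> le (ls ! p) (ls ! q) \<Longrightarrow> p \<le> q"
    using lin by (auto simp: linearization_def)
  have n2: "\<not> le (ls ! Suc i) (ls ! i)" using ord[of "Suc i" i] i by auto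
  have n1: "\<not> le (ls ! i) (ls ! Suc i)"
  proof
    assume l: "le (ls ! i) (ls ! Suc i)"
    have ne: "ls ! i \<noteq> ls ! Suc i" using d(1) i by (simp add: nth_eq_iff_index_eq)
    have "\<not> covers S le (ls ! i) (ls ! Suc i)" using bc b by (auto simp: bicoloring_def bad_def)
    then obtain z where z: "z \<in> S" "le (ls ! i) z" "le z (ls ! Suc i)" "z \<noteq> ls ! i" "z \<noteq> ls ! Suc i"
      using l ne i d by (auto simp: covers_def)
    then obtain k where k: "k < length ls" "z = ls ! k" using d by (auto simp: in_set_conv_nth)
    have "i \<le> k" "k \<le> Suc i" using ord[of i k] ord[of k "Suc i"] z k i by auto
    hence "k = i \<or> k = Suc i" by auto
    thus False using z k by auto
  qed
  show ?thesis using n1 n2 by simp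
qed

lemma lin_swapl:
  assumes lin: "linearization S le ls" and i: "Suc i < length ls"
    and n1: "\<not> le (ls ! i) (ls ! Suc i)" and n2: "\<not> le (ls ! Suc i) (ls ! i)"
  shows "linearization S le (swapl ls i)"
proof -
  have d: "distinct ls" "set ls = S" using lin by (auto simp: linearization_def)
  have ord: "\<And>p q. p < length ls \<Longrightarrow> q < length ls \<Longrightarrow> le (ls ! p) (ls ! q) \<Longrightarrow> p \<le> q"
    using lin by (auto simp: linearization_def)
  have "distinct (swapl ls i)" "set (swapl ls i) = S" using d i by (auto simp: swapl_def)
  moreover have "\<forall>p<length ls. \<forall>q<length ls. le (swapl ls i ! p) (swapl ls i ! q) \<longrightarrow> p \<le> q"
  proof (intro allI impI)
    fix p q assume p: "p < length ls" and q: "q < length ls"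
      and l: "le (swapl ls i ! p) (swapl ls i ! q)"
    let ?t = "Transposition.transpose i (Suc i)"
    have l2: "le (ls ! ?t p) (ls ! ?t q)" using l p q i by (simp add: swapl_nth)
    have tp: "?t p < length ls" "?t q < length ls" using p q i by (auto simp: transpose_def)
    have "?t p \<le> ?t q" using ord[OF tp l2] .
    show "p \<le> q"
    proof (rule ccontr)
      assume "\<not> p \<le> q"
      hence "q = i \<and> p = Suc i" using \<open>?t p \<le> ?t q\<close>
        by (auto simp: transpose_def split: if_splits)
      thus False using l2 n1 by (simp add: transpose_def)
    qed
  qed
  ultimately show ?thesis by (simp add: linearization_def)
qed

theorem theorem2p2:
  fixes S :: "'a set" and le :: "'a \<Rightarrow> 'a \<Rightarrow> bool"
    and col :: "'a \<Rightarrow> bool" and qs :: "'a list"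
  assumes "finite_poset S le"
    and "bicoloring S le col"
    and "distinct qs" and "set qs = S"
  shows "(sign_imbalance S le qs =
           int (card {ls \<in> linearizations S le. compatible col ls \<and> evenperm (lin_perm qs ls)})
         - int (card {ls \<in> linearizations S le. compatible col ls \<and> \<not> evenperm (lin_perm qs ls)}))
         \<and> ((\<nexists>ls. ls \<in> linearizations S le \<and> compatible col ls) \<longrightarrow> sign_balanced S le qs)"
proof -
  let ?L = "linearizations S le"
  let ?ev = "\<lambda>ls. evenperm (lin_perm qs ls)"
  define f where "f ls = swapl ls (LEAST i. bad col ls i)" for ls
  have fS: "finite S" using assms(1) by (simp add: finite_poset_def)
  have finL: "finite ?L"
  proof (rule finite_subset[OF _ finite_lists_length_eq[OF fS, of "card S"]])
    show "?L \<subseteq> {xs. set xs \<subseteq> S \<and> length xs = card S}"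
      by (auto simp: linearizations_def linearization_def distinct_card)
  qed
  have key: "\<And>ls. ls \<in> ?L \<Longrightarrow> \<not> compatible col ls \<Longrightarrow>
      f ls \<in> ?L \<and> \<not> compatible col (f ls) \<and> f (f ls) = ls \<and> ?ev (f ls) = (\<not> ?ev ls)"
  proof -
    fix ls assume L: "ls \<in> ?L" and nc: "\<not> compatible col ls"
    let ?i = "LEAST i. bad col ls i"
    have lin: "linearization S le ls" using L by (simp add: linearizations_def)
    have b: "bad col ls ?i" using nc by (metis LeastI compatible_bad)
    have i: "Suc ?i < length ls" using b by (simp add: bad_def)
    note inc = bad_incomp[OF assms(1,2) lin b]
    have linf: "linearization S le (f ls)" unfolding f_def
      using lin_swapl[OF lin i] inc by simp
    have bs: "bad col (f ls) = bad col ls" unfolding f_def by (rule bad_swapl[OF b])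
    have ff: "f (f ls) = ls" unfolding f_def using bs swapl_swapl[OF i]
      by (simp add: f_def)
    have "?ev (f ls) = (\<not> ?ev ls)" unfolding f_def
      using evenperm_swapl[OF assms(3) _ i] lin assms(4) by simp
    thus "f ls \<in> ?L \<and> \<not> compatible col (f ls) \<and> f (f ls) = ls \<and> ?ev (f ls) = (\<not> ?ev ls)"
      using linf ff bs nc by (simp add: linearizations_def compatible_bad)
  qed
  let ?EN = "{ls \<in> ?L. \<not> compatible col ls \<and> ?ev ls}"
  let ?ON = "{ls \<in> ?L. \<not> compatible col ls \<and> \<not> ?ev ls}"
  let ?EC = "{ls \<in> ?L. compatible col ls \<and> ?ev ls}"
  let ?OC = "{ls \<in> ?L. compatible col ls \<and> \<not> ?ev ls}"
  have "bij_betw f ?EN ?ON"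
    by (rule bij_betw_byWitness[where f'=f]) (use key in auto)
  hence cN: "card ?EN = card ?ON" by (rule bij_betw_same_card)
  have u1: "{ls \<in> ?L. ?ev ls} = ?EC \<union> ?EN" by auto
  have u2: "card (?EC \<union> ?EN) = card ?EC + card ?EN"
    by (rule card_Un_disjoint) (use finL in auto)
  have cE: "card {ls \<in> ?L. ?ev ls} = card ?EC + card ?EN" unfolding u1 u2 ..
  have u3: "{ls \<in> ?L. \<not> ?ev ls} = ?OC \<union> ?ON" by auto
  have u4: "card (?OC \<union> ?ON) = card ?OC + card ?ON"
    by (rule card_Un_disjoint) (use finL in auto)
  have cO: "card {ls \<in> ?L. \<not> ?ev ls} = card ?OC + card ?ON" unfolding u3 u4 ..
  have eq: "sign_imbalance S le qs = int (card ?EC) - int (card ?OC)"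
    unfolding sign_imbalance_def using cE cO cN by simp
  moreover have "(\<nexists>ls. ls \<in> ?L \<and> compatible col ls) \<longrightarrow> sign_balanced S le qs"
  proof
    assume "\<nexists>ls. ls \<in> ?L \<and> compatible col ls"
    hence e1: "?EC = {}" and e2: "?OC = {}" by auto
    show "sign_balanced S le qs" unfolding sign_balanced_def eq e1 e2 by simp
  qed
  ultimately show ?thesis by simp
qed

end
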